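(* Let $(G,S,C,\phi_0)$ be a minimal counterexample with outer face $D$ (so $S=V(D)$). If $e=uv$ is an edge of $G$ not in $E(D)$, then $|E(C_{uv})|\ge 2$. Moreover, if $e$ is not contained in a triangle, then $|E(C_{uv})|=3$.
   Context: All graphs are finite and simple. Two cycles are adjacent if they share at least one common edge. A $3$-correspondence assignment for $G$ consists of the list $L(u)=\{1,2,3\}$ for each vertex together with, for each edge $e=uv$, a matching $C_e$ (not necessarily perfect) between $\{u\}\times\{1,2,3\}$ and $\{v\}\times\{1,2,3\}$. A $C$-coloring is a map $\phi$ to $\{1,2,3\}$ with $(u,\phi(u))(v,\phi(v))\notin E(C_{uv})$ for every edge $uv$. For a closed walk $v_1\dots v_m$ ($v_m=v_1$), $C$ is inconsistent on it if there are colors $c_i$ with $(v_i,c_i)(v_{i+1},c_{i+1})\in E(C_{v_iv_{i+1}})$ for all $i\in[m-1]$ and $c_1\ne c_m$. A counterexample is a quadruple $(G,S,C,\phi_0)$ where $G$ is a plane graph with no two adjacent cycles of length at most $8$, $S\subseteq V(G)$ with $|S|\le 12$ is either a single vertex or the vertex set of the boundary of a face, $C$ is a $3$-correspondence assignment consistent on every closed walk of length $3$, and $\phi_0$ is a $C$-coloring of $G[S]$ that does not extend to a $C$-coloring of $G$. A minimal counterexample is a counterexample minimizing $|V(G)|$, subject to that minimizing $|E(G)|-|E(G[S])|$, and subject to both maximizing $\sum_{uv\in E(G)}|E(C_{uv})|$. In a minimal counterexample $S$ is the vertex set of a face, and the embedding is chosen so that this face is the outer face $D$. *)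

theory Defs
  imports "HOL-Analysis.Analysis"
begin

definition simple_graph :: "'a set \<Rightarrow> 'a set set \<Rightarrow> bool" where
  "simple_graph V E \<longleftrightarrow> finite V \<and> (\<forall>e\<in>E. e \<subseteq> V \<and> card e = 2)"

definition plane_graph ::
  "'a set \<Rightarrow> 'a set set \<Rightarrow> ('a \<Rightarrow> complex) \<Rightarrow> ('a set \<Rightarrow> real \<Rightarrow> complex) \<Rightarrow> bool" where
  "plane_graph V E pos \<gamma> \<longleftrightarrow>
     simple_graph V E \<and> inj_on pos V \<and>
     (\<forall>e\<in>E. arc (\<gamma> e) \<and> {pathstart (\<gamma> e), pathfinish (\<gamma> e)} = pos ` e) \<and>
     (\<forall>e\<in>E. \<forall>w\<in>V. pos w \<in> path_image (\<gamma> e) \<longrightarrow> w \<in> e) \<and>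
     (\<forall>e\<in>E. \<forall>e'\<in>E. e \<noteq> e' \<longrightarrow>
        path_image (\<gamma> e) \<inter> path_image (\<gamma> e') \<subseteq> pos ` (e \<inter> e'))"

definition drawing ::
  "'a set \<Rightarrow> 'a set set \<Rightarrow> ('a \<Rightarrow> complex) \<Rightarrow> ('a set \<Rightarrow> real \<Rightarrow> complex) \<Rightarrow> complex set" where
  "drawing V E pos \<gamma> = pos ` V \<union> (\<Union>e\<in>E. path_image (\<gamma> e))"

definition faces ::
  "'a set \<Rightarrow> 'a set set \<Rightarrow> ('a \<Rightarrow> complex) \<Rightarrow> ('a set \<Rightarrow> real \<Rightarrow> complex) \<Rightarrow> complex set set" where
  "faces V E pos \<gamma> = components (- drawing V E pos \<gamma>)"

definition face_vertices :: "'a set \<Rightarrow> ('a \<Rightarrow> complex) \<Rightarrow> complex set \<Rightarrow> 'a set" where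
  "face_vertices V pos F = {v\<in>V. pos v \<in> frontier F}"

definition face_edges ::
  "'a set set \<Rightarrow> ('a set \<Rightarrow> real \<Rightarrow> complex) \<Rightarrow> complex set \<Rightarrow> 'a set set" where
  "face_edges E \<gamma> F = {e\<in>E. path_image (\<gamma> e) \<subseteq> frontier F}"

text \<open>A cycle of length k is given by a list of k \<ge> 3 distinct vertices, consecutive ones
  (cyclically) adjacent; as a subgraph it is determined by its edge set.\<close>
definition is_cycle :: "'a set set \<Rightarrow> 'a list \<Rightarrow> bool" where
  "is_cycle E vs \<longleftrightarrow> length vs \<ge> 3 \<and> distinct vs \<and>
     (\<forall>i<length vs. {vs ! i, vs ! ((i + 1) mod length vs)} \<in> E)"

definition cycle_edges :: "'a list \<Rightarrow> 'a set set" where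
  "cycle_edges vs = {{vs ! i, vs ! ((i + 1) mod length vs)} | i. i < length vs}"

definition no_adjacent_short_cycles :: "'a set set \<Rightarrow> bool" where
  "no_adjacent_short_cycles E \<longleftrightarrow>
     (\<forall>vs ws. is_cycle E vs \<and> is_cycle E ws \<and> length vs \<le> 8 \<and> length ws \<le> 8 \<and>
        cycle_edges vs \<noteq> cycle_edges ws \<longrightarrow> cycle_edges vs \<inter> cycle_edges ws = {})"

text \<open>M u v is the set of colour pairs (c,d) such that (u,c)(v,d) is an edge of the matching
  C_uv.  We normalise M u v = {} for non-adjacent u, v and require M v u to be the converse.\<close>
definition corr3 :: "'a set set \<Rightarrow> ('a \<Rightarrow> 'a \<Rightarrow> (nat \<times> nat) set) \<Rightarrow> bool" where
  "corr3 E M \<longleftrightarrow>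
     (\<forall>u v. M u v \<subseteq> {1,2,3} \<times> {1,2,3}) \<and>
     (\<forall>u v. M v u = converse (M u v)) \<and>
     (\<forall>u v. {u, v} \<notin> E \<longrightarrow> M u v = {}) \<and>
     (\<forall>u v c d d'. (c, d) \<in> M u v \<longrightarrow> (c, d') \<in> M u v \<longrightarrow> d = d') \<and>
     (\<forall>u v c c' d. (c, d) \<in> M u v \<longrightarrow> (c', d) \<in> M u v \<longrightarrow> c = c')"

definition C_edges :: "('a \<Rightarrow> 'a \<Rightarrow> (nat \<times> nat) set) \<Rightarrow> 'a set \<Rightarrow> ('a \<times> nat) set set" where
  "C_edges M e = {{(u, c), (v, d)} | u v c d. e = {u, v} \<and> (c, d) \<in> M u v}"

definition closed_walk :: "'a set set \<Rightarrow> 'a list \<Rightarrow> bool" where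
  "closed_walk E ws \<longleftrightarrow> ws \<noteq> [] \<and> hd ws = last ws \<and>
     (\<forall>i. Suc i < length ws \<longrightarrow> {ws ! i, ws ! Suc i} \<in> E)"

definition inconsistent_on :: "('a \<Rightarrow> 'a \<Rightarrow> (nat \<times> nat) set) \<Rightarrow> 'a list \<Rightarrow> bool" where
  "inconsistent_on M ws \<longleftrightarrow>
     (\<exists>cs. length cs = length ws \<and> cs \<noteq> [] \<and>
        (\<forall>i. Suc i < length ws \<longrightarrow> (cs ! i, cs ! Suc i) \<in> M (ws ! i) (ws ! Suc i)) \<and>
        hd cs \<noteq> last cs)"

text \<open>Consistent on every closed walk of length 3 (i.e. with 3 edges, 4 listed vertices).\<close>
definition consistent_on_triangles :: "'a set set \<Rightarrow> ('a \<Rightarrow> 'a \<Rightarrow> (nat \<times> nat) set) \<Rightarrow> bool" where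
  "consistent_on_triangles E M \<longleftrightarrow>
     (\<forall>ws. closed_walk E ws \<and> length ws = 4 \<longrightarrow> \<not> inconsistent_on M ws)"

definition C_coloring_on ::
  "'a set \<Rightarrow> 'a set set \<Rightarrow> ('a \<Rightarrow> 'a \<Rightarrow> (nat \<times> nat) set) \<Rightarrow> ('a \<Rightarrow> nat) \<Rightarrow> bool" where
  "C_coloring_on X E M \<phi> \<longleftrightarrow>
     (\<forall>v\<in>X. \<phi> v \<in> {1,2,3}) \<and>
     (\<forall>u\<in>X. \<forall>v\<in>X. {u, v} \<in> E \<longrightarrow> (\<phi> u, \<phi> v) \<notin> M u v)"

definition counterexample ::
  "'a set \<Rightarrow> 'a set set \<Rightarrow> ('a \<Rightarrow> complex) \<Rightarrow> ('a set \<Rightarrow> real \<Rightarrow> complex) \<Rightarrow>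
   'a set \<Rightarrow> ('a \<Rightarrow> 'a \<Rightarrow> (nat \<times> nat) set) \<Rightarrow> ('a \<Rightarrow> nat) \<Rightarrow> bool" where
  "counterexample V E pos \<gamma> S M \<phi>0 \<longleftrightarrow>
     plane_graph V E pos \<gamma> \<and> no_adjacent_short_cycles E \<and>
     S \<subseteq> V \<and> card S \<le> 12 \<and>
     ((\<exists>v\<in>V. S = {v}) \<or> (\<exists>F\<in>faces V E pos \<gamma>. S = face_vertices V pos F)) \<and>
     corr3 E M \<and> consistent_on_triangles E M \<and>
     C_coloring_on S E M \<phi>0 \<and>
     \<not> (\<exists>\<phi>. C_coloring_on V E M \<phi> \<and> (\<forall>v\<in>S. \<phi> v = \<phi>0 v))"

definition induced_edges :: "'a set set \<Rightarrow> 'a set \<Rightarrow> 'a set set" where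
  "induced_edges E S = {e\<in>E. e \<subseteq> S}"

definition weight :: "'a set set \<Rightarrow> ('a \<Rightarrow> 'a \<Rightarrow> (nat \<times> nat) set) \<Rightarrow> nat" where
  "weight E M = (\<Sum>e\<in>E. card (C_edges M e))"

definition better ::
  "'a set \<Rightarrow> 'a set set \<Rightarrow> 'a set \<Rightarrow> ('a \<Rightarrow> 'a \<Rightarrow> (nat \<times> nat) set) \<Rightarrow>
   'a set \<Rightarrow> 'a set set \<Rightarrow> 'a set \<Rightarrow> ('a \<Rightarrow> 'a \<Rightarrow> (nat \<times> nat) set) \<Rightarrow> bool" where
  "better V' E' S' M' V E S M \<longleftrightarrow>
     card V' < card V \<or>
     (card V' = card V \<and>
        (card E' - card (induced_edges E' S') < card E - card (induced_edges E S) \<or>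
         (card E' - card (induced_edges E' S') = card E - card (induced_edges E S) \<and>
          weight E' M' > weight E M)))"

definition minimal_counterexample ::
  "'a set \<Rightarrow> 'a set set \<Rightarrow> ('a \<Rightarrow> complex) \<Rightarrow> ('a set \<Rightarrow> real \<Rightarrow> complex) \<Rightarrow>
   'a set \<Rightarrow> ('a \<Rightarrow> 'a \<Rightarrow> (nat \<times> nat) set) \<Rightarrow> ('a \<Rightarrow> nat) \<Rightarrow> bool" where
  "minimal_counterexample V E pos \<gamma> S M \<phi>0 \<longleftrightarrow>
     counterexample V E pos \<gamma> S M \<phi>0 \<and>
     \<not> (\<exists>V' E' pos' \<gamma>' S' M' \<phi>0'. counterexample V' E' pos' \<gamma>' S' M' \<phi>0' \<and>
          better V' E' S' M' V E S M)"

end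

theory Submission
  imports Defs
begin


definition C3 :: "nat set" where "C3 = {1,2,3}"
definition fun_rel :: "(nat\<times>nat) set \<Rightarrow> bool" where
  "fun_rel r \<longleftrightarrow> (\<forall>x y y'. (x,y)\<in>r \<longrightarrow> (x,y')\<in>r \<longrightarrow> y=y')"
definition pinj :: "(nat\<times>nat) set \<Rightarrow> bool" where
  "pinj r \<longleftrightarrow> fun_rel r \<and> fun_rel (converse r)"
definition tri :: "(nat\<times>nat) set \<Rightarrow> (nat\<times>nat) set \<Rightarrow> (nat\<times>nat) set \<Rightarrow> bool" where
  "tri f a b \<longleftrightarrow> (\<forall>x y z t. (x,y)\<in>f \<longrightarrow> (y,z)\<in>a \<longrightarrow> (z,t)\<in>b \<longrightarrow> t=x)"
definition cons3 where "cons3 f a b \<longleftrightarrow> tri f a b \<and> tri a b f \<and> tri b f a"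

lemma finite_C3: "finite C3" and card_C3: "card C3 = 3"
  by (auto simp: C3_def)

lemma finite_sub: "r \<subseteq> C3 \<times> C3 \<Longrightarrow> finite r"
  using finite_C3 finite_subset by blast

lemma card_dom: assumes "r \<subseteq> C3 \<times> C3" "fun_rel r" shows "card r = card (Domain r)"
proof -
  have "inj_on fst r" using assms(2) unfolding fun_rel_def inj_on_def by auto
  then have "card (fst ` r) = card r" by (rule card_image)
  moreover have "fst ` r = Domain r" by force
  ultimately show ?thesis by simp
qed

lemma card_ran: assumes "r \<subseteq> C3 \<times> C3" "fun_rel (converse r)" shows "card r = card (Range r)"
proof -
  have "inj_on snd r" using assms(2) unfolding fun_rel_def inj_on_def by auto
  then have "card (snd ` r) = card r" by (rule card_image)
  moreover have "snd ` r = Range r" by force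
  ultimately show ?thesis by simp
qed

lemma card_le3: assumes "r \<subseteq> C3 \<times> C3" "fun_rel r" shows "card r \<le> 3"
proof -
  have "Domain r \<subseteq> C3" using assms(1) by auto
  then have "card (Domain r) \<le> 3" using card_mono[OF finite_C3] card_C3 by metis
  then show ?thesis using card_dom[OF assms] by simp
qed

lemma step_ext:
  assumes "r \<subseteq> C3 \<times> C3" "pinj r" "card r < 3"
  shows "\<exists>c d. c \<in> C3 \<and> d \<in> C3 \<and> (c,d) \<notin> r \<and> insert (c,d) r \<subseteq> C3 \<times> C3 \<and> pinj (insert (c,d) r)"
proof -
  have fr: "fun_rel r" "fun_rel (converse r)" using assms(2) pinj_def by auto
  have "\<not> C3 \<subseteq> Domain r"
  proof
    assume "C3 \<subseteq> Domain r"
    then have "card C3 \<le> card (Domain r)" using card_mono finite_sub[OF assms(1)] finite_Domain by metis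
    then show False using card_dom[OF assms(1) fr(1)] card_C3 assms(3) by simp
  qed
  then obtain c where c: "c \<in> C3" "c \<notin> Domain r" by auto
  have "\<not> C3 \<subseteq> Range r"
  proof
    assume "C3 \<subseteq> Range r"
    then have "card C3 \<le> card (Range r)" using card_mono finite_sub[OF assms(1)] finite_Range by metis
    then show False using card_ran[OF assms(1) fr(2)] card_C3 assms(3) by simp
  qed
  then obtain d where d: "d \<in> C3" "d \<notin> Range r" by auto
  have "pinj (insert (c,d) r)" using fr c d unfolding pinj_def fun_rel_def by blast
  then show ?thesis using c d assms(1) by blast
qed

lemma perfect_ext:
  assumes "r \<subseteq> C3 \<times> C3" "pinj r"
  shows "\<exists>s. r \<subseteq> s \<and> s \<subseteq> C3 \<times> C3 \<and> pinj s \<and> card s = 3"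
  using assms
proof (induction "3 - card r" arbitrary: r rule: less_induct)
  case less
  show ?case
  proof (cases "card r < 3")
    case False
    then show ?thesis using less.prems card_le3 pinj_def by (metis le_antisym not_less order_refl)
  next
    case True
    obtain c d where cd: "c \<in> C3" "d \<in> C3" "(c,d) \<notin> r" "insert (c,d) r \<subseteq> C3 \<times> C3" "pinj (insert (c,d) r)"
      using step_ext[OF less.prems True] by blast
    have "card (insert (c,d) r) = Suc (card r)" using cd(3) finite_sub[OF less.prems(1)] by simp
    then have "3 - card (insert (c,d) r) < 3 - card r" using True by simp
    from less.hyps[OF this cd(4,5)] show ?thesis by blast
  qed
qed

lemma tri_mono: "tri f a b \<Longrightarrow> f0 \<subseteq> f \<Longrightarrow> a0 \<subseteq> a \<Longrightarrow> b0 \<subseteq> b \<Longrightarrow> tri f0 a0 b0"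
  unfolding tri_def by blast

lemma cons3_mono: "cons3 f a b \<Longrightarrow> f0 \<subseteq> f \<Longrightarrow> a0 \<subseteq> a \<Longrightarrow> b0 \<subseteq> b \<Longrightarrow> cons3 f0 a0 b0"
  unfolding cons3_def using tri_mono by metis

lemma cons3_comp: "pinj a \<Longrightarrow> pinj b \<Longrightarrow> cons3 (converse (a O b)) a b"
  unfolding cons3_def tri_def pinj_def fun_rel_def by blast

lemma full_dom: assumes "s \<subseteq> C3 \<times> C3" "pinj s" "card s = 3"
  shows "Domain s = C3" "Range s = C3"
proof -
  have "Domain s \<subseteq> C3" "Range s \<subseteq> C3" using assms(1) by auto
  moreover have "card (Domain s) = 3" "card (Range s) = 3"
    using card_dom card_ran assms pinj_def by metis+
  ultimately show "Domain s = C3" "Range s = C3" using card_subset_eq finite_C3 card_C3 by metis+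
qed

lemma comp_card:
  assumes "a \<subseteq> C3 \<times> C3" "pinj a" "card a = 3" "b \<subseteq> C3 \<times> C3" "pinj b" "card b = 3"
  shows "card (converse (a O b)) = 3" "converse (a O b) \<subseteq> C3 \<times> C3" "pinj (converse (a O b))"
proof -
  have da: "Domain a = C3" "Range a = C3" and db: "Domain b = C3" using full_dom assms by metis+
  have sub: "a O b \<subseteq> C3 \<times> C3" using assms by auto
  have fr: "fun_rel (a O b)" using assms(2,5) unfolding pinj_def fun_rel_def by blast
  have "Domain (a O b) = C3"
  proof
    show "Domain (a O b) \<subseteq> C3" using sub by auto
    show "C3 \<subseteq> Domain (a O b)"
    proof
      fix x assume "x \<in> C3"
      then obtain y where y: "(x,y) \<in> a" using da by auto
      then have "y \<in> C3" using da by auto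
      then obtain z where "(y,z) \<in> b" using db by auto
      then show "x \<in> Domain (a O b)" using y by auto
    qed
  qed
  then have "card (a O b) = 3" using card_dom[OF sub fr] card_C3 by simp
  then show "card (converse (a O b)) = 3" by simp
  show "converse (a O b) \<subseteq> C3 \<times> C3" using sub by auto
  show "pinj (converse (a O b))" using assms(2,5) unfolding pinj_def fun_rel_def by blast
qed
definition good where
  "good a b c d \<longleftrightarrow> (\<forall>z t. (d,z)\<in>a \<longrightarrow> (z,t)\<in>b \<longrightarrow> t=c) \<and> (\<forall>z y. (z,c)\<in>b \<longrightarrow> (y,z)\<in>a \<longrightarrow> y=d)
     \<and> (\<forall>z z'. (d,z)\<in>a \<longrightarrow> (z',c)\<in>b \<longrightarrow> z=z')"

lemma cons3_insert: "cons3 f a b \<Longrightarrow> good a b c d \<Longrightarrow> cons3 (insert (c,d) f) a b"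
  unfolding cons3_def tri_def good_def by blast

lemma two_elems: "x \<in> C3 \<Longrightarrow> \<exists>p q. p \<noteq> q \<and> p \<in> C3 \<and> q \<in> C3 \<and> C3 = {x,p,q} \<and> p \<noteq> x \<and> q \<noteq> x"
proof -
  assume "x \<in> C3"
  then have "x = 1 \<or> x = 2 \<or> x = 3" unfolding C3_def by auto
  then show ?thesis
  proof (elim disjE)
    assume "x = 1" then show ?thesis by (intro exI[of _ 2] exI[of _ 3]) (auto simp: C3_def)
  next
    assume "x = 2" then show ?thesis by (intro exI[of _ 1] exI[of _ 3]) (auto simp: C3_def)
  next
    assume "x = 3" then show ?thesis by (intro exI[of _ 1] exI[of _ 2]) (auto simp: C3_def)
  qed
qed

lemma pigeon: "k1 \<noteq> k2 \<Longrightarrow> k1 \<in> C3 \<Longrightarrow> k2 \<in> C3 \<Longrightarrow> m1 \<in> C3 \<Longrightarrow> m2 \<in> C3 \<Longrightarrow>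
   m1 \<notin> {k1,k2} \<Longrightarrow> m2 \<notin> {k1,k2} \<Longrightarrow> m1 = m2"
  unfolding C3_def by auto

lemma lemA:
  assumes ab: "a \<subseteq> C3 \<times> C3" "b \<subseteq> C3 \<times> C3" and pa: "pinj a" and pb: "pinj b"
    and c0: "c0 \<in> C3" and d0: "d0 \<in> C3"
  shows "\<exists>c d. c \<in> C3 \<and> d \<in> C3 \<and> c \<noteq> c0 \<and> d \<noteq> d0 \<and> good a b c d"
proof (rule ccontr)
  assume H0: "\<not> ?thesis"
  obtain c1 c2 where cc: "c1 \<noteq> c2" "c1 \<in> C3" "c2 \<in> C3" "C3 = {c0,c1,c2}" and c12: "c1 \<noteq> c0" "c2 \<noteq> c0" using two_elems[OF c0] by blast
  obtain d1 d2 where dd: "d1 \<noteq> d2" "d1 \<in> C3" "d2 \<in> C3" "C3 = {d0,d1,d2}" and d12: "d1 \<noteq> d0" "d2 \<noteq> d0" using two_elems[OF d0] by blast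

  have H: "\<And>c d. c \<in> {c1,c2} \<Longrightarrow> d \<in> {d1,d2} \<Longrightarrow> \<not> good a b c d"
    using H0 cc dd c12 d12 by blast
  have fa: "fun_rel a" "fun_rel (converse a)" and fb: "fun_rel b" "fun_rel (converse b)"
    using pa pb pinj_def by auto
  have g_both: "\<And>c d. (\<nexists>z. (z,c)\<in>b) \<Longrightarrow> (\<nexists>z. (d,z)\<in>a) \<Longrightarrow> good a b c d"
    unfolding good_def by blast
  have g_close: "\<And>c d z. (z,c)\<in>b \<Longrightarrow> (d,z)\<in>a \<Longrightarrow> good a b c d"
    using fa fb unfolding good_def fun_rel_def by blast
  have g_cfree: "\<And>c d k. (\<nexists>z. (z,c)\<in>b) \<Longrightarrow> (d,k)\<in>a \<Longrightarrow> (\<nexists>t. (k,t)\<in>b) \<Longrightarrow> good a b c d"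
    using fa unfolding good_def fun_rel_def by blast
  have g_dfree: "\<And>c d k. (\<nexists>z. (d,z)\<in>a) \<Longrightarrow> (k,c)\<in>b \<Longrightarrow> (\<nexists>y. (y,k)\<in>a) \<Longrightarrow> good a b c d"
    using fb unfolding good_def fun_rel_def by blast
  show False
  proof (cases "(\<exists>z. (z,c1)\<in>b) \<and> (\<exists>z. (z,c2)\<in>b)")
    case True
    then obtain k1 k2 where k: "(k1,c1)\<in>b" "(k2,c2)\<in>b" by blast
    have kne: "k1 \<noteq> k2" using k fb cc(1) unfolding fun_rel_def by blast
    have kC: "k1 \<in> C3" "k2 \<in> C3" using k ab by auto
    show False
    proof (cases "\<exists>d\<in>{d1,d2}. \<nexists>z. (d,z)\<in>a")
      case True
      then obtain d where d: "d \<in> {d1,d2}" "\<nexists>z. (d,z)\<in>a" by blast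
      have "\<exists>y. (y,k1)\<in>a" using g_dfree[OF d(2) k(1)] H d(1) by blast
      then obtain y1 where y1: "(y1,k1)\<in>a" by blast
      have "\<exists>y. (y,k2)\<in>a" using g_dfree[OF d(2) k(2)] H d(1) by blast
      then obtain y2 where y2: "(y2,k2)\<in>a" by blast
      have "y1 \<noteq> y2" using y1 y2 kne fa unfolding fun_rel_def by blast
      moreover have "y1 \<notin> {d1,d2}" using g_close[OF k(1) y1] H by blast
      moreover have "y2 \<notin> {d1,d2}" using g_close[OF k(2) y2] H by blast
      moreover have "y1 \<in> C3" "y2 \<in> C3" using y1 y2 ab by auto
      ultimately show False using dd(4) by (metis insertE singletonD)
    next
      case False
      then obtain m1 m2 where m: "(d1,m1)\<in>a" "(d2,m2)\<in>a" by blast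
      have "m1 \<noteq> m2" using m fa dd(1) unfolding fun_rel_def by blast
      moreover have "m1 \<notin> {k1,k2}" using g_close k m(1) H by blast
      moreover have "m2 \<notin> {k1,k2}" using g_close k m(2) H by blast
      moreover have "m1 \<in> C3" "m2 \<in> C3" using m ab by auto
      ultimately show False using pigeon kne kC by blast
    qed
  next
    case False
    then obtain cs where cs: "cs \<in> {c1,c2}" "\<nexists>z. (z,cs)\<in>b" by blast
    have "\<exists>z. (d1,z)\<in>a" using g_both[OF cs(2)] H cs(1) by blast
    then obtain m1 where m1: "(d1,m1)\<in>a" by blast
    have "\<exists>z. (d2,z)\<in>a" using g_both[OF cs(2)] H cs(1) by blast
    then obtain m2 where m2: "(d2,m2)\<in>a" by blast
    have mne: "m1 \<noteq> m2" using m1 m2 fa dd(1) unfolding fun_rel_def by blast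
    have "\<exists>t. (m1,t)\<in>b" using g_cfree[OF cs(2) m1] H cs(1) by blast
    then obtain t1 where t1: "(m1,t1)\<in>b" by blast
    have "\<exists>t. (m2,t)\<in>b" using g_cfree[OF cs(2) m2] H cs(1) by blast
    then obtain t2 where t2: "(m2,t2)\<in>b" by blast
    have "t1 \<noteq> t2" using t1 t2 mne fb unfolding fun_rel_def by blast
    moreover have "t1 \<notin> {c1,c2}" using g_close[OF t1 m1] H by blast
    moreover have "t2 \<notin> {c1,c2}" using g_close[OF t2 m2] H by blast
    moreover have "t1 \<in> C3" "t2 \<in> C3" using t1 t2 ab by auto
    ultimately show False using cc(4) by (metis insertE singletonD)
  qed
qed
lemma lt3: "(i::nat) < 3 \<Longrightarrow> i = 0 \<or> i = 1 \<or> i = 2" by auto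

lemma cycle_edges3: "cycle_edges [a,b,c] = {{a,b},{b,c},{c,a}}"
proof -
  have "cycle_edges [a,b,c] = (\<lambda>i. {[a,b,c] ! i, [a,b,c] ! ((i + 1) mod 3)}) ` {..<3}"
    unfolding cycle_edges_def by auto
  also have "{..<3::nat} = {0,1,2}" by auto
  finally show ?thesis by simp
qed

lemma is_cycle3: "a \<noteq> b \<Longrightarrow> b \<noteq> c \<Longrightarrow> a \<noteq> c \<Longrightarrow> {a,b} \<in> E \<Longrightarrow> {b,c} \<in> E \<Longrightarrow> {c,a} \<in> E \<Longrightarrow> is_cycle E [a,b,c]"
  unfolding is_cycle_def
proof (intro conjI allI impI)
  assume *: "a \<noteq> b" "b \<noteq> c" "a \<noteq> c" "{a,b} \<in> E" "{b,c} \<in> E" "{c,a} \<in> E"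
  fix i assume "i < length [a,b,c]"
  then have "i = 0 \<or> i = 1 \<or> i = 2" by auto
  then show "{[a,b,c] ! i, [a,b,c] ! ((i + 1) mod length [a,b,c])} \<in> E" using * by auto
qed auto

lemma edge_ne: "simple_graph V E \<Longrightarrow> {x,y} \<in> E \<Longrightarrow> x \<noteq> y"
proof
  assume "simple_graph V E" "{x,y} \<in> E" "x = y"
  then have "card {x,y} = 2" unfolding simple_graph_def by blast
  then show False using \<open>x = y\<close> by simp
qed

lemma unique_common:
  assumes sg: "simple_graph V E" and nas: "no_adjacent_short_cycles E"
    and e: "{u,v} \<in> E" "{u,w} \<in> E" "{v,w} \<in> E" "{u,w'} \<in> E" "{v,w'} \<in> E"
  shows "w = w'"
proof (rule ccontr)
  assume ne: "w \<noteq> w'"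
  have d: "u \<noteq> v" "u \<noteq> w" "v \<noteq> w" "u \<noteq> w'" "v \<noteq> w'" using e edge_ne[OF sg] by metis+
  have c1: "is_cycle E [u,v,w]" using is_cycle3[of u v w E] d e by (simp add: insert_commute)
  have c2: "is_cycle E [u,v,w']" using is_cycle3[of u v w' E] d e by (simp add: insert_commute)
  have "cycle_edges [u,v,w] \<noteq> cycle_edges [u,v,w']"
  proof
    assume "cycle_edges [u,v,w] = cycle_edges [u,v,w']"
    moreover have "{v,w} \<in> cycle_edges [u,v,w]" by (simp add: cycle_edges3)
    ultimately have "{v,w} \<in> {{u,v},{v,w'},{w',u}}" by (simp only: cycle_edges3)
    then show False using d ne by (auto simp: doubleton_eq_iff)
  qed
  moreover have "{u,v} \<in> cycle_edges [u,v,w] \<inter> cycle_edges [u,v,w']" by (simp add: cycle_edges3)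
  moreover have "length [u,v,w] \<le> 8" "length [u,v,w'] \<le> 8" by simp_all
  ultimately show False using nas c1 c2 unfolding no_adjacent_short_cycles_def by blast
qed

lemma tri_char:
  "consistent_on_triangles E M \<longleftrightarrow>
    (\<forall>a b c. {a,b} \<in> E \<longrightarrow> {b,c} \<in> E \<longrightarrow> {c,a} \<in> E \<longrightarrow> tri (M a b) (M b c) (M c a))"
proof
  assume H: "consistent_on_triangles E M"
  show "\<forall>a b c. {a,b} \<in> E \<longrightarrow> {b,c} \<in> E \<longrightarrow> {c,a} \<in> E \<longrightarrow> tri (M a b) (M b c) (M c a)"
  proof (intro allI impI)
    fix a b c assume e: "{a,b} \<in> E" "{b,c} \<in> E" "{c,a} \<in> E"
    have i3: "\<And>i::nat. Suc i < 4 \<longleftrightarrow> i = 0 \<or> i = 1 \<or> i = 2" by auto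
    have cw: "closed_walk E [a,b,c,a]" unfolding closed_walk_def
    proof (intro conjI allI impI)
      fix i assume "Suc i < length [a,b,c,a]"
      then have "i = 0 \<or> i = 1 \<or> i = 2" by auto
      then show "{[a,b,c,a] ! i, [a,b,c,a] ! Suc i} \<in> E" using e by (auto simp: insert_commute)
    qed simp_all
    show "tri (M a b) (M b c) (M c a)" unfolding tri_def
    proof (intro allI impI)
      fix x y z t assume m: "(x,y) \<in> M a b" "(y,z) \<in> M b c" "(z,t) \<in> M c a"
      show "t = x"
      proof (rule ccontr)
        assume "t \<noteq> x"
        have "\<forall>i. Suc i < length [a,b,c,a] \<longrightarrow> ([x,y,z,t] ! i, [x,y,z,t] ! Suc i) \<in> M ([a,b,c,a] ! i) ([a,b,c,a] ! Suc i)"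
        proof (intro allI impI)
          fix i assume "Suc i < length [a,b,c,a]"
          then have "i = 0 \<or> i = 1 \<or> i = 2" by auto
          then show "([x,y,z,t] ! i, [x,y,z,t] ! Suc i) \<in> M ([a,b,c,a] ! i) ([a,b,c,a] ! Suc i)" using m by auto
        qed
        then have "inconsistent_on M [a,b,c,a]" unfolding inconsistent_on_def
          using \<open>t \<noteq> x\<close> by (intro exI[of _ "[x,y,z,t]"]) simp
        then show False using H cw unfolding consistent_on_triangles_def by auto
      qed
    qed
  qed
next
  assume H: "\<forall>a b c. {a,b} \<in> E \<longrightarrow> {b,c} \<in> E \<longrightarrow> {c,a} \<in> E \<longrightarrow> tri (M a b) (M b c) (M c a)"
  show "consistent_on_triangles E M" unfolding consistent_on_triangles_def
  proof (intro allI impI notI)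
    fix ws assume w: "closed_walk E ws \<and> length ws = 4" and inc: "inconsistent_on M ws"
    obtain cs where cs: "length cs = length ws" "cs \<noteq> []"
      "\<forall>i. Suc i < length ws \<longrightarrow> (cs ! i, cs ! Suc i) \<in> M (ws ! i) (ws ! Suc i)" "hd cs \<noteq> last cs"
      using inc unfolding inconsistent_on_def by blast
    have ws: "hd ws = last ws" "\<forall>i. Suc i < length ws \<longrightarrow> {ws ! i, ws ! Suc i} \<in> E" "length ws = 4"
      using w unfolding closed_walk_def by auto
    obtain a b c d where wd: "ws = [a,b,c,d]" using ws(3) by (auto simp: length_Suc_conv numeral_eq_Suc)
    obtain x y z t where cd: "cs = [x,y,z,t]" using cs(1) ws(3) by (auto simp: length_Suc_conv numeral_eq_Suc)
    have da: "d = a" using ws(1) wd by simp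
    have e: "{a,b} \<in> E" "{b,c} \<in> E" "{c,a} \<in> E"
      using ws(2)[rule_format, of 0] ws(2)[rule_format, of 1] ws(2)[rule_format, of 2] wd da by (simp_all add: insert_commute)
    have m: "(x,y) \<in> M a b" "(y,z) \<in> M b c" "(z,t) \<in> M c a"
      using cs(3)[rule_format, of 0] cs(3)[rule_format, of 1] cs(3)[rule_format, of 2] wd cd da by simp_all
    have "t = x" using H e m unfolding tri_def by blast
    then show False using cs(4) cd by simp
  qed
qed

definition upd :: "('a \<Rightarrow> 'a \<Rightarrow> (nat\<times>nat) set) \<Rightarrow> 'a \<Rightarrow> 'a \<Rightarrow> (nat\<times>nat) set \<Rightarrow> 'a \<Rightarrow> 'a \<Rightarrow> (nat\<times>nat) set" where
  "upd M u v f = (\<lambda>x y. if x = u \<and> y = v then f else if x = v \<and> y = u then converse f else M x y)"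




lemma tri_conv: "tri f a b \<Longrightarrow> tri (converse b) (converse a) (converse f)"
  unfolding tri_def by blast

lemma upd_eq: "upd M u v g x y = (if x = u \<and> y = v then g else if x = v \<and> y = u then converse g else M x y)"
  unfolding upd_def by (rule refl)

lemma upd_other: "\<not> (x = u \<and> y = v) \<Longrightarrow> \<not> (x = v \<and> y = u) \<Longrightarrow> upd M u v g x y = M x y"
  unfolding upd_eq by (simp only: if_False)

lemma upd_uv: "upd M u v g u v = g" unfolding upd_eq by (simp only: simp_thms if_True)

lemma upd_vu: assumes "u \<noteq> v" shows "upd M u v g v u = converse g"
proof -
  have "\<not> (v = u \<and> u = v)" using assms by blast
  then show ?thesis unfolding upd_eq by (simp only: simp_thms if_True if_False)
qed

lemma notri_pair1:
  assumes nt: "\<nexists>w. {u,w} \<in> E \<and> {v,w} \<in> E" and e: "{a,b} \<in> E" "{b,c} \<in> E" "{c,a} \<in> E"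
  shows "\<not> (a = u \<and> b = v)"
proof
  assume h: "a = u \<and> b = v"
  have "{u,c} \<in> E" using e(3) h by (simp add: insert_commute)
  moreover have "{v,c} \<in> E" using e(2) h by simp
  ultimately show False using nt by blast
qed

lemma notri_pair:
  assumes nt: "\<nexists>w. {u,w} \<in> E \<and> {v,w} \<in> E" and e: "{a,b} \<in> E" "{b,c} \<in> E" "{c,a} \<in> E"
  shows "\<not> (a = u \<and> b = v)" "\<not> (a = v \<and> b = u)"
proof -
  show "\<not> (a = u \<and> b = v)" by (rule notri_pair1[OF nt e])
  have nt': "\<nexists>w. {v,w} \<in> E \<and> {u,w} \<in> E" using nt by blast
  show "\<not> (a = v \<and> b = u)" by (rule notri_pair1[OF nt' e])
qed

lemma cons_upd_notri:
  assumes cot: "consistent_on_triangles E M" and nt: "\<nexists>w. {u,w} \<in> E \<and> {v,w} \<in> E"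
  shows "consistent_on_triangles E (upd M u v g)"
  unfolding tri_char
proof (intro allI impI)
  fix a b c assume e: "{a,b} \<in> E" "{b,c} \<in> E" "{c,a} \<in> E"
  have o: "tri (M a b) (M b c) (M c a)" using tri_char[THEN iffD1, OF cot, rule_format, OF e] .
  note n1 = notri_pair[OF nt e]
  note n2 = notri_pair[OF nt e(2,3,1)]
  note n3 = notri_pair[OF nt e(3,1,2)]
  show "tri (upd M u v g a b) (upd M u v g b c) (upd M u v g c a)"
    unfolding upd_other[OF n1] upd_other[OF n2] upd_other[OF n3] by (rule o)
qed

lemma cons_upd_tri:
  assumes cot: "consistent_on_triangles E M"
    and uniq: "\<And>w'. {u,w'} \<in> E \<Longrightarrow> {v,w'} \<in> E \<Longrightarrow> w' = w"
    and d: "u \<noteq> v" "u \<noteq> w" "v \<noteq> w"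
    and c3: "cons3 g (M v w) (M w u)"
    and cv: "\<And>x y. M y x = converse (M x y)"
  shows "consistent_on_triangles E (upd M u v g)"
  unfolding tri_char
proof (intro allI impI)
  fix a b c assume e: "{a,b} \<in> E" "{b,c} \<in> E" "{c,a} \<in> E"
  define A where "A = M v w"
  define B where "B = M w u"
  have T: "tri g A B" "tri A B g" "tri B g A" using c3 unfolding cons3_def A_def B_def by auto
  have T': "tri (converse B) (converse A) (converse g)" "tri (converse g) (converse B) (converse A)"
     "tri (converse A) (converse g) (converse B)" using T tri_conv by auto
  have Muw: "M u w = converse B" using cv[of u w] unfolding B_def .
  have Mwv: "M w v = converse A" using cv[of w v] unfolding A_def .
  have o: "tri (M a b) (M b c) (M c a)" using tri_char[THEN iffD1, OF cot, rule_format, OF e] .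
  have Uuv: "upd M u v g u v = g" by (rule upd_uv)
  have Uvu: "upd M u v g v u = converse g" by (rule upd_vu[OF d(1)])
  have Uvw: "upd M u v g v w = A" unfolding A_def by (rule upd_other) (use d in blast)+
  have Uwu: "upd M u v g w u = B" unfolding B_def by (rule upd_other) (use d in blast)+
  have Uuw: "upd M u v g u w = converse B" unfolding Muw[symmetric] by (rule upd_other) (use d in blast)+
  have Uwv: "upd M u v g w v = converse A" unfolding Mwv[symmetric] by (rule upd_other) (use d in blast)+
  have sy: "\<And>x y. {x,y} \<in> E \<Longrightarrow> {y,x} \<in> E" by (simp only: insert_commute)
  consider "a = u \<and> b = v" | "a = v \<and> b = u" | "b = u \<and> c = v" | "b = v \<and> c = u"
    | "c = u \<and> a = v" | "c = v \<and> a = u" | "\<not> (a = u \<and> b = v) \<and> \<not> (a = v \<and> b = u) \<and>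
       \<not> (b = u \<and> c = v) \<and> \<not> (b = v \<and> c = u) \<and> \<not> (c = u \<and> a = v) \<and> \<not> (c = v \<and> a = u)"
    by blast
  then show "tri (upd M u v g a b) (upd M u v g b c) (upd M u v g c a)"
  proof cases
    case 1
    then have h: "a = u" "b = v" by blast+
    have "{u,c} \<in> E" "{v,c} \<in> E" using e(3) e(2) sy unfolding h by blast+
    then have "c = w" using uniq by blast
    show ?thesis unfolding h \<open>c = w\<close> Uuv Uvw Uwu by (rule T(1))
  next
    case 2
    then have h: "a = v" "b = u" by blast+
    have "{u,c} \<in> E" "{v,c} \<in> E" using e(3) e(2) sy unfolding h by blast+
    then have "c = w" using uniq by blast
    show ?thesis unfolding h \<open>c = w\<close> Uvu Uuw Uwv by (rule T'(2))
  next
    case 3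
    then have h: "b = u" "c = v" by blast+
    have "{u,a} \<in> E" "{v,a} \<in> E" using e(1) e(3) sy unfolding h by blast+
    then have "a = w" using uniq by blast
    show ?thesis unfolding h \<open>a = w\<close> Uwu Uuv Uvw by (rule T(3))
  next
    case 4
    then have h: "b = v" "c = u" by blast+
    have "{u,a} \<in> E" "{v,a} \<in> E" using e(1) e(3) sy unfolding h by blast+
    then have "a = w" using uniq by blast
    show ?thesis unfolding h \<open>a = w\<close> Uwv Uvu Uuw by (rule T'(3))
  next
    case 5
    then have h: "c = u" "a = v" by blast+
    have "{u,b} \<in> E" "{v,b} \<in> E" using e(2) e(1) sy unfolding h by blast+
    then have "b = w" using uniq by blast
    show ?thesis unfolding h \<open>b = w\<close> Uvw Uwu Uuv by (rule T(2))
  next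
    case 6
    then have h: "c = v" "a = u" by blast+
    have "{u,b} \<in> E" "{v,b} \<in> E" using e(2) e(1) sy unfolding h by blast+
    then have "b = w" using uniq by blast
    show ?thesis unfolding h \<open>b = w\<close> Uuw Uwv Uvu by (rule T'(1))
  next
    case 7
    then have n: "\<not> (a = u \<and> b = v)" "\<not> (a = v \<and> b = u)" "\<not> (b = u \<and> c = v)" "\<not> (b = v \<and> c = u)"
       "\<not> (c = u \<and> a = v)" "\<not> (c = v \<and> a = u)" by blast+
    show ?thesis unfolding upd_other[OF n(1,2)] upd_other[OF n(3,4)] upd_other[OF n(5,6)] by (rule o)
  qed
qed

lemma card_C_edges:
  assumes uv: "u \<noteq> v" and cv: "M v u = converse (M u v)"
  shows "card (C_edges M {u,v}) = card (M u v)"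
proof -
  let ?h = "\<lambda>p. {(u, fst p), (v, snd p)}"
  have eq: "C_edges M {u,v} = ?h ` M u v"
  proof
    show "C_edges M {u,v} \<subseteq> ?h ` M u v"
    proof
      fix x assume "x \<in> C_edges M {u,v}"
      then obtain x1 y1 c d where h: "x = {(x1,c),(y1,d)}" "{u,v} = {x1,y1}" "(c,d) \<in> M x1 y1"
        unfolding C_edges_def by blast
      from h(2) have "(x1 = u \<and> y1 = v) \<or> (x1 = v \<and> y1 = u)" by (metis doubleton_eq_iff)
      then show "x \<in> ?h ` M u v"
      proof
        assume *: "x1 = u \<and> y1 = v"
        then have m: "(c,d) \<in> M u v" and x: "x = {(u,c),(v,d)}" using h(1,3) by blast+
        have "x = ?h (c,d)" unfolding x by (simp only: fst_conv snd_conv)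
        then show ?thesis using m by (rule image_eqI)
      next
        assume *: "x1 = v \<and> y1 = u"
        then have "(c,d) \<in> M v u" using h(3) by blast
        then have m: "(d,c) \<in> M u v" using cv by blast
        have x: "x = {(u,d),(v,c)}" using h(1) * by blast
        have "x = ?h (d,c)" unfolding x by (simp only: fst_conv snd_conv)
        then show ?thesis using m by (rule image_eqI)
      qed
    qed
    show "?h ` M u v \<subseteq> C_edges M {u,v}"
    proof
      fix x assume "x \<in> ?h ` M u v"
      then obtain p where "x = ?h p" "p \<in> M u v" by blast
      then show "x \<in> C_edges M {u,v}" unfolding C_edges_def
        by (intro CollectI exI[of _ u] exI[of _ v] exI[of _ "fst p"] exI[of _ "snd p"]) simp
    qed
  qed
  have "inj_on ?h (M u v)"
  proof
    fix p q assume "p \<in> M u v" "q \<in> M u v" "?h p = ?h q"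
    then have "(u, fst p) \<in> ?h q" "(v, snd p) \<in> ?h q" by blast+
    then have "fst p = fst q" "snd p = snd q" using uv by blast+
    then show "p = q" by (rule prod_eqI)
  qed
  then have "card (?h ` M u v) = card (M u v)" by (rule card_image)
  then show ?thesis unfolding eq .
qed

lemma C_edges_upd_other:
  assumes ne: "e \<noteq> {u,v}"
  shows "C_edges (upd M u v g) e = C_edges M e"
proof -
  have key: "\<And>x1 y1. e = {x1,y1} \<Longrightarrow> upd M u v g x1 y1 = M x1 y1"
  proof -
    fix x1 y1 assume h: "e = {x1,y1}"
    have "\<not> (x1 = u \<and> y1 = v)" using h ne by blast
    moreover have "\<not> (x1 = v \<and> y1 = u)"
    proof
      assume "x1 = v \<and> y1 = u"
      then have "e = {v,u}" using h by blast
      then show False using ne by (simp only: insert_commute)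
    qed
    ultimately show "upd M u v g x1 y1 = M x1 y1" by (rule upd_other)
  qed
  show ?thesis unfolding C_edges_def
  proof (intro Collect_cong iffI)
    fix x
    assume "\<exists>x1 y1 c d. x = {(x1, c), (y1, d)} \<and> e = {x1, y1} \<and> (c, d) \<in> upd M u v g x1 y1"
    then obtain x1 y1 c d where h: "x = {(x1, c), (y1, d)}" "e = {x1, y1}" "(c, d) \<in> upd M u v g x1 y1" by blast
    have "(c, d) \<in> M x1 y1" using h(3) unfolding key[OF h(2)] .
    then show "\<exists>x1 y1 c d. x = {(x1, c), (y1, d)} \<and> e = {x1, y1} \<and> (c, d) \<in> M x1 y1"
      using h(1,2) by blast
  next
    fix x
    assume "\<exists>x1 y1 c d. x = {(x1, c), (y1, d)} \<and> e = {x1, y1} \<and> (c, d) \<in> M x1 y1"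
    then obtain x1 y1 c d where h: "x = {(x1, c), (y1, d)}" "e = {x1, y1}" "(c, d) \<in> M x1 y1" by blast
    have "(c, d) \<in> upd M u v g x1 y1" using h(3) unfolding key[OF h(2)] .
    then show "\<exists>x1 y1 c d. x = {(x1, c), (y1, d)} \<and> e = {x1, y1} \<and> (c, d) \<in> upd M u v g x1 y1"
      using h(1,2) by blast
  qed
qed

lemma pinj_mono: "pinj s \<Longrightarrow> g \<subseteq> s \<Longrightarrow> pinj g"
  unfolding pinj_def fun_rel_def by blast

lemma extA:
  assumes fC: "f \<subseteq> C3 \<times> C3" and fp: "pinj f" and f1: "card f \<le> 1"
    and AB: "A \<subseteq> C3 \<times> C3" "B \<subseteq> C3 \<times> C3" "pinj A" "pinj B" and c3: "cons3 f A B"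
  shows "\<exists>g. f \<subseteq> g \<and> g \<subseteq> C3 \<times> C3 \<and> pinj g \<and> card f < card g \<and> cons3 g A B"
proof -
  have fin: "finite f" using finite_sub[OF fC] .
  obtain c0 d0 where c0: "c0 \<in> C3" "d0 \<in> C3" and fs: "f \<subseteq> {(c0,d0)}"
  proof (cases "card f = 0")
    case True
    then have "f = {}" using fin by simp
    then show ?thesis using that[of 1 1] unfolding C3_def by blast
  next
    case False
    then have "card f = 1" using f1 by linarith
    then obtain q where "f = {q}" using card_1_singletonE by blast
    moreover obtain c0 d0 where "q = (c0,d0)" by (cases q)
    ultimately show ?thesis using that[of c0 d0] fC by blast
  qed
  obtain c d where cd: "c \<in> C3" "d \<in> C3" "c \<noteq> c0" "d \<noteq> d0" "good A B c d"
    using lemA[OF AB c0] by blast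
  have nin: "(c,d) \<notin> f" using fs cd(3) by blast
  have "pinj (insert (c,d) f)" using fp fs cd(3,4) unfolding pinj_def fun_rel_def by blast
  moreover have "card (insert (c,d) f) = Suc (card f)" using nin fin by simp
  moreover have "insert (c,d) f \<subseteq> C3 \<times> C3" using fC cd(1,2) by blast
  moreover have "cons3 (insert (c,d) f) A B" by (rule cons3_insert[OF c3 cd(5)])
  ultimately show ?thesis by (intro exI[of _ "insert (c,d) f"]) auto
qed

lemma extB:
  assumes AB: "A \<subseteq> C3 \<times> C3" "B \<subseteq> C3 \<times> C3" "pinj A" "pinj B"
  shows "\<exists>g. g \<subseteq> C3 \<times> C3 \<and> pinj g \<and> 2 \<le> card g \<and> p \<notin> g \<and> cons3 g A B"
proof -
  obtain A' where A': "A \<subseteq> A'" "A' \<subseteq> C3 \<times> C3" "pinj A'" "card A' = 3" using perfect_ext[OF AB(1,3)] by blast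
  obtain B' where B': "B \<subseteq> B'" "B' \<subseteq> C3 \<times> C3" "pinj B'" "card B' = 3" using perfect_ext[OF AB(2,4)] by blast
  define s where "s = converse (A' O B')"
  have s: "card s = 3" "s \<subseteq> C3 \<times> C3" "pinj s" using comp_card[OF A'(2,3,4) B'(2,3,4)] unfolding s_def by blast+
  have cs: "cons3 s A' B'" unfolding s_def by (rule cons3_comp[OF A'(3) B'(3)])
  have sub: "s - {p} \<subseteq> s" by blast
  have "card (s - {p}) \<ge> 2" using s(1) by (simp add: card_Diff_singleton_if)
  moreover have "s - {p} \<subseteq> C3 \<times> C3" using s(2) by blast
  moreover have "pinj (s - {p})" using pinj_mono[OF s(3) sub] .
  moreover have "cons3 (s - {p}) A B" using cons3_mono[OF cs sub A'(1) B'(1)] .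
  moreover have "p \<notin> s - {p}" by blast
  ultimately show ?thesis by blast
qed

lemma extNT:
  "\<exists>g. g \<subseteq> C3 \<times> C3 \<and> pinj g \<and> card g = 3 \<and> (p::nat\<times>nat) \<notin> g"
proof (cases "fst p = snd p")
  case True
  let ?g = "{(1,2),(2,3),(3,1)} :: (nat\<times>nat) set"
  have "?g \<subseteq> C3 \<times> C3" unfolding C3_def by simp
  moreover have "pinj ?g" unfolding pinj_def fun_rel_def by simp
  moreover have "card ?g = 3" by simp
  moreover have "p \<notin> ?g" using True by (cases p) auto
  ultimately show ?thesis by blast
next
  case False
  let ?g = "{(1,1),(2,2),(3,3)} :: (nat\<times>nat) set"
  have "?g \<subseteq> C3 \<times> C3" unfolding C3_def by simp
  moreover have "pinj ?g" unfolding pinj_def fun_rel_def by simp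
  moreover have "card ?g = 3" by simp
  moreover have "p \<notin> ?g" using False by (cases p) auto
  ultimately show ?thesis by blast
qed

lemma upd_cases:
  assumes "x = u \<and> y = v \<Longrightarrow> P g"
    and "x = v \<and> y = u \<Longrightarrow> P (converse g)"
    and "\<not> (x = u \<and> y = v) \<Longrightarrow> \<not> (x = v \<and> y = u) \<Longrightarrow> P (M x y)"
    and uv: "u \<noteq> v"
  shows "P (upd M u v g x y)"
proof (cases "x = u \<and> y = v")
  case True
  then have "upd M u v g x y = g" using upd_uv[of M u v g] by blast
  then show ?thesis using assms(1) True by simp
next
  case F1: False
  show ?thesis
  proof (cases "x = v \<and> y = u")
    case True
    then have "upd M u v g x y = converse g" using upd_vu[OF uv, of M g] by blast
    then show ?thesis using assms(2) True by simp
  next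
    case False
    then have "upd M u v g x y = M x y" using upd_other[OF F1 False] by blast
    then show ?thesis using assms(3) F1 False by simp
  qed
qed

lemma improve:
  assumes mc: "minimal_counterexample V E pos \<gamma> S M \<phi>0"
    and e: "{u,v} \<in> E"
    and fC: "f \<subseteq> C3 \<times> C3" and fp: "pinj f" and lt: "card (M u v) < card f"
    and sup: "M u v \<subseteq> f \<or> (u \<in> S \<and> v \<in> S)"
    and av: "u \<in> S \<and> v \<in> S \<longrightarrow> (\<phi>0 u, \<phi>0 v) \<notin> f"
    and cons: "consistent_on_triangles E (upd M u v f)"
  shows False
proof -
  have mcx: "counterexample V E pos \<gamma> S M \<phi>0 \<and> \<not> (\<exists>V' E' pos' \<gamma>' S' M' \<phi>0'. counterexample V' E' pos' \<gamma>' S' M' \<phi>0' \<and>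
          better V' E' S' M' V E S M)" using mc unfolding minimal_counterexample_def .
  note ce = mcx[THEN conjunct1]
  note nb = mcx[THEN conjunct2]
  note cx = ce[unfolded counterexample_def]
  note pg = cx[THEN conjunct1]
  note nas = cx[THEN conjunct2, THEN conjunct1]
  note SV = cx[THEN conjunct2, THEN conjunct2, THEN conjunct1]
  note S12 = cx[THEN conjunct2, THEN conjunct2, THEN conjunct2, THEN conjunct1]
  note Sf = cx[THEN conjunct2, THEN conjunct2, THEN conjunct2, THEN conjunct2, THEN conjunct1]
  note c3 = cx[THEN conjunct2, THEN conjunct2, THEN conjunct2, THEN conjunct2, THEN conjunct2, THEN conjunct1]
  note ct = cx[THEN conjunct2, THEN conjunct2, THEN conjunct2, THEN conjunct2, THEN conjunct2, THEN conjunct2, THEN conjunct1]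
  note colS = cx[THEN conjunct2, THEN conjunct2, THEN conjunct2, THEN conjunct2, THEN conjunct2, THEN conjunct2, THEN conjunct2, THEN conjunct1]
  note noext = cx[THEN conjunct2, THEN conjunct2, THEN conjunct2, THEN conjunct2, THEN conjunct2, THEN conjunct2, THEN conjunct2, THEN conjunct2]
  have sg: "simple_graph V E" using pg unfolding plane_graph_def by blast
  have uv: "u \<noteq> v" using edge_ne[OF sg e] .
  have sgE: "\<forall>e\<in>E. e \<subseteq> V \<and> card e = 2" using sg unfolding simple_graph_def by (rule conjunct2)
  have "{u,v} \<subseteq> V" using sgE e by blast
  then have uvV: "u \<in> V" "v \<in> V" by blast+
  note cc = c3[unfolded corr3_def]
  have Msub: "\<And>x y. M x y \<subseteq> {1,2,3} \<times> {1,2,3}" using cc[THEN conjunct1] by blast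
  have Mcv: "\<And>x y. M y x = converse (M x y)" using cc[THEN conjunct2, THEN conjunct1] by blast
  have Mne: "\<And>x y. {x,y} \<notin> E \<Longrightarrow> M x y = {}" using cc[THEN conjunct2, THEN conjunct2, THEN conjunct1] by blast
  have Mf1: "\<And>x y c d d'. (c,d) \<in> M x y \<Longrightarrow> (c,d') \<in> M x y \<Longrightarrow> d = d'"
    using cc[THEN conjunct2, THEN conjunct2, THEN conjunct2, THEN conjunct1] by blast
  have Mf2: "\<And>x y c c' d. (c,d) \<in> M x y \<Longrightarrow> (c',d) \<in> M x y \<Longrightarrow> c = c'"
    using cc[THEN conjunct2, THEN conjunct2, THEN conjunct2, THEN conjunct2] by blast
  have ff: "fun_rel f" "fun_rel (converse f)" using fp unfolding pinj_def by blast+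
  have fC': "f \<subseteq> {1,2,3} \<times> {1,2,3}" using fC unfolding C3_def .
  define M' where "M' = upd M u v f"
  have c3': "corr3 E M'" unfolding corr3_def
  proof (intro conjI allI impI)
    fix x y show "M' x y \<subseteq> {1,2,3} \<times> {1,2,3}" unfolding M'_def
      by (rule upd_cases[OF _ _ _ uv]) (use fC' Msub in blast)+
  next
    fix x y show "M' y x = converse (M' x y)" unfolding M'_def
    proof (rule upd_cases[OF _ _ _ uv])
      assume "x = u \<and> y = v"
      then have h: "x = u" "y = v" by blast+
      show "upd M u v f y x = converse f" unfolding h by (rule upd_vu[OF uv])
    next
      assume "x = v \<and> y = u"
      then have h: "x = v" "y = u" by blast+
      show "upd M u v f y x = converse (converse f)" unfolding h converse_converse by (rule upd_uv)
    next
      assume a: "\<not> (x = u \<and> y = v)" "\<not> (x = v \<and> y = u)"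
      have "\<not> (y = u \<and> x = v)" "\<not> (y = v \<and> x = u)" using a by blast+
      then have "upd M u v f y x = M y x" by (rule upd_other)
      moreover have "M y x = converse (M x y)" by (rule Mcv)
      ultimately show "upd M u v f y x = converse (M x y)" by (rule trans)
    qed
  next
    fix x y assume ne: "{x,y} \<notin> E"
    show "M' x y = {}" unfolding M'_def
    proof (rule upd_cases[OF _ _ _ uv])
      assume "x = u \<and> y = v" then show "f = {}" using ne e by blast
    next
      assume "x = v \<and> y = u" then have "{x,y} = {u,v}" by (simp only: insert_commute)
      then show "converse f = {}" using ne e by simp
    next
      assume "\<not> (x = u \<and> y = v)" "\<not> (x = v \<and> y = u)"
      show "M x y = {}" by (rule Mne[OF ne])
    qed
  next
    fix x y c d d' assume h: "(c,d) \<in> M' x y" "(c,d') \<in> M' x y"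
    have "\<forall>c d d'. (c,d) \<in> M' x y \<longrightarrow> (c,d') \<in> M' x y \<longrightarrow> d = d'" unfolding M'_def
      by (rule upd_cases[OF _ _ _ uv]) (use ff Mf1 in \<open>unfold fun_rel_def, blast+\<close>)
    then show "d = d'" using h by blast
  next
    fix x y c c' d assume h: "(c,d) \<in> M' x y" "(c',d) \<in> M' x y"
    have "\<forall>c c' d. (c,d) \<in> M' x y \<longrightarrow> (c',d) \<in> M' x y \<longrightarrow> c = c'" unfolding M'_def
      by (rule upd_cases[OF _ _ _ uv]) (use ff Mf2 in \<open>unfold fun_rel_def, blast+\<close>)
    then show "c = c'" using h by blast
  qed
  have M'uv: "M' u v = f" unfolding M'_def by (rule upd_uv)
  have M'vu: "M' v u = converse f" unfolding M'_def by (rule upd_vu[OF uv])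
  have M'o: "\<And>x y. \<not> (x = u \<and> y = v) \<Longrightarrow> \<not> (x = v \<and> y = u) \<Longrightarrow> M' x y = M x y"
    unfolding M'_def by (rule upd_other)
  have colS': "C_coloring_on S E M' \<phi>0" unfolding C_coloring_on_def
  proof (intro conjI ballI impI)
    fix x assume "x \<in> S" then show "\<phi>0 x \<in> {1,2,3}" using colS unfolding C_coloring_on_def by blast
  next
    fix x y assume xy: "x \<in> S" "y \<in> S" "{x,y} \<in> E"
    have old: "(\<phi>0 x, \<phi>0 y) \<notin> M x y" using colS xy unfolding C_coloring_on_def by blast
    show "(\<phi>0 x, \<phi>0 y) \<notin> M' x y"
    proof (cases "x = u \<and> y = v")
      case True
      then show ?thesis using av xy M'uv by blast
    next
      case F1: False
      show ?thesis
      proof (cases "x = v \<and> y = u")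
        case True
        then show ?thesis using av xy M'vu by blast
      next
        case False
        then show ?thesis using old M'o[OF F1 False] by simp
      qed
    qed
  qed
  have noext': "\<not> (\<exists>\<phi>. C_coloring_on V E M' \<phi> \<and> (\<forall>v\<in>S. \<phi> v = \<phi>0 v))"
  proof
    assume "\<exists>\<phi>. C_coloring_on V E M' \<phi> \<and> (\<forall>v\<in>S. \<phi> v = \<phi>0 v)"
    then obtain \<phi> where ph: "C_coloring_on V E M' \<phi>" "\<forall>v\<in>S. \<phi> v = \<phi>0 v" by blast
    have key: "(\<phi> u, \<phi> v) \<notin> M u v"
    proof (cases "M u v \<subseteq> f")
      case True
      have "(\<phi> u, \<phi> v) \<notin> M' u v" using ph(1) uvV e unfolding C_coloring_on_def by blast
      then show ?thesis using True M'uv by blast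
    next
      case False
      then have S2: "u \<in> S" "v \<in> S" using sup by blast+
      have "(\<phi>0 u, \<phi>0 v) \<notin> M u v" using colS S2 e unfolding C_coloring_on_def by blast
      then show ?thesis using ph(2) S2 by simp
    qed
    have "C_coloring_on V E M \<phi>" unfolding C_coloring_on_def
    proof (intro conjI ballI impI)
      fix x assume "x \<in> V" then show "\<phi> x \<in> {1,2,3}" using ph(1) unfolding C_coloring_on_def by blast
    next
      fix x y assume xy: "x \<in> V" "y \<in> V" "{x,y} \<in> E"
      have new: "(\<phi> x, \<phi> y) \<notin> M' x y" using ph(1) xy unfolding C_coloring_on_def by blast
      show "(\<phi> x, \<phi> y) \<notin> M x y"
      proof (cases "x = u \<and> y = v")
        case True
        then show ?thesis using key by blast
      next
        case F1: False
        show ?thesis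
        proof (cases "x = v \<and> y = u")
          case True
          have "M v u = converse (M u v)" by (rule Mcv)
          then show ?thesis using key True by blast
        next
          case False
          then show ?thesis using new M'o[OF F1 False] by simp
        qed
      qed
    qed
    then show False using noext ph(2) by blast
  qed
  have ce': "counterexample V E pos \<gamma> S M' \<phi>0" unfolding counterexample_def
    using pg nas SV S12 Sf c3' colS' noext' cons unfolding M'_def by blast
  have finE: "finite E"
  proof -
    have "E \<subseteq> Pow V" using sg unfolding simple_graph_def by blast
    moreover have "finite V" using sg unfolding simple_graph_def by blast
    ultimately show ?thesis using finite_subset by blast
  qed
  have sumeq: "(\<Sum>e\<in>E - {{u,v}}. card (C_edges M' e)) = (\<Sum>e\<in>E - {{u,v}}. card (C_edges M e))"
  proof (rule sum.cong)
    fix x assume "x \<in> E - {{u,v}}"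
    then have "x \<noteq> {u,v}" by blast
    then have "C_edges M' x = C_edges M x" unfolding M'_def by (rule C_edges_upd_other)
    then show "card (C_edges M' x) = card (C_edges M x)" by (rule arg_cong)
  qed (rule refl)
  have w1: "weight E M' = card (C_edges M' {u,v}) + (\<Sum>e\<in>E - {{u,v}}. card (C_edges M' e))"
    unfolding weight_def by (rule sum.remove[OF finE e])
  have w2: "weight E M = card (C_edges M {u,v}) + (\<Sum>e\<in>E - {{u,v}}. card (C_edges M e))"
    unfolding weight_def by (rule sum.remove[OF finE e])
  have M'vu2: "M' v u = converse (M' u v)" unfolding M'vu M'uv ..
  have k1: "card (C_edges M' {u,v}) = card f" using card_C_edges[OF uv M'vu2] unfolding M'uv .
  have Mvu: "M v u = converse (M u v)" by (rule Mcv)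
  have k2: "card (C_edges M {u,v}) = card (M u v)" by (rule card_C_edges[OF uv Mvu])
  have "weight E M < weight E M'" using w1 w2 k1 k2 sumeq lt by linarith
  then have "better V E S M' V E S M" unfolding better_def by blast
  then show False using nb ce' by blast
qed

theorem mainTheorem5:
  fixes V :: "'a set" and E :: "'a set set" and pos :: "'a \<Rightarrow> complex"
    and \<gamma> :: "'a set \<Rightarrow> real \<Rightarrow> complex" and S :: "'a set"
    and M :: "'a \<Rightarrow> 'a \<Rightarrow> (nat \<times> nat) set" and \<phi>0 :: "'a \<Rightarrow> nat"
    and D :: "complex set" and u v :: 'a
  assumes "minimal_counterexample V E pos \<gamma> S M \<phi>0"
    and "D \<in> faces V E pos \<gamma>" and "\<not> bounded D"
    and "S = face_vertices V pos D"
    and "{u, v} \<in> E" and "{u, v} \<notin> face_edges E \<gamma> D"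
  shows "card (C_edges M {u, v}) \<ge> 2 \<and>
         ((\<nexists>w. {u, w} \<in> E \<and> {v, w} \<in> E) \<longrightarrow> card (C_edges M {u, v}) = 3)"
proof -
  note mc = assms(1)
  note e = assms(5)
  have mcx: "counterexample V E pos \<gamma> S M \<phi>0 \<and> \<not> (\<exists>V' E' pos' \<gamma>' S' M' \<phi>0'. counterexample V' E' pos' \<gamma>' S' M' \<phi>0' \<and>
          better V' E' S' M' V E S M)" using mc unfolding minimal_counterexample_def .
  note ce = mcx[THEN conjunct1]
  note cx = ce[unfolded counterexample_def]
  note pg = cx[THEN conjunct1]
  note nas = cx[THEN conjunct2, THEN conjunct1]
  note c3 = cx[THEN conjunct2, THEN conjunct2, THEN conjunct2, THEN conjunct2, THEN conjunct2, THEN conjunct1]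
  note ct = cx[THEN conjunct2, THEN conjunct2, THEN conjunct2, THEN conjunct2, THEN conjunct2, THEN conjunct2, THEN conjunct1]
  have sg: "simple_graph V E" using pg unfolding plane_graph_def by blast
  have uv: "u \<noteq> v" using edge_ne[OF sg e] .
  note cc = c3[unfolded corr3_def]
  have Msub: "\<And>x y. M x y \<subseteq> {1,2,3} \<times> {1,2,3}" using cc[THEN conjunct1] by blast
  have Mcv: "\<And>x y. M y x = converse (M x y)" using cc[THEN conjunct2, THEN conjunct1] by blast
  have Mf1: "\<And>x y c d d'. (c,d) \<in> M x y \<Longrightarrow> (c,d') \<in> M x y \<Longrightarrow> d = d'"
    using cc[THEN conjunct2, THEN conjunct2, THEN conjunct2, THEN conjunct1] by blast
  have Mf2: "\<And>x y c c' d. (c,d) \<in> M x y \<Longrightarrow> (c',d) \<in> M x y \<Longrightarrow> c = c'"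
    using cc[THEN conjunct2, THEN conjunct2, THEN conjunct2, THEN conjunct2] by blast
  have CS: "\<And>x y. M x y \<subseteq> C3 \<times> C3" unfolding C3_def by (rule Msub)
  have PJ: "\<And>x y. pinj (M x y)" unfolding pinj_def fun_rel_def using Mf1 Mf2 by blast
  note fC = CS[of u v]
  note fp = PJ[of u v]
  have Mvu: "M v u = converse (M u v)" by (rule Mcv)
  have cardeq: "card (C_edges M {u,v}) = card (M u v)" by (rule card_C_edges[OF uv Mvu])
  have le3: "card (M u v) \<le> 3" using card_le3[OF fC] fp unfolding pinj_def by blast
  have fin: "finite (M u v)" by (rule finite_sub[OF fC])
  have NT: "card (M u v) = 3" if nt: "\<nexists>w. {u,w} \<in> E \<and> {v,w} \<in> E"
  proof (rule ccontr)
    assume "card (M u v) \<noteq> 3"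
    then have lt: "card (M u v) < 3" using le3 by linarith
    have cons: "\<And>g. consistent_on_triangles E (upd M u v g)" by (rule cons_upd_notri[OF ct nt])
    show False
    proof (cases "u \<in> S \<and> v \<in> S")
      case True
      obtain g where g: "g \<subseteq> C3 \<times> C3" "pinj g" "card g = 3" "(\<phi>0 u, \<phi>0 v) \<notin> g" using extNT by blast
      have l: "card (M u v) < card g" using lt g(3) by simp
      have s: "M u v \<subseteq> g \<or> (u \<in> S \<and> v \<in> S)" using True by blast
      have a: "u \<in> S \<and> v \<in> S \<longrightarrow> (\<phi>0 u, \<phi>0 v) \<notin> g" using g(4) by blast
      show False by (rule improve[OF mc e g(1) g(2) l s a cons])
    next
      case False
      obtain c d where cd: "c \<in> C3" "d \<in> C3" "(c,d) \<notin> M u v" "insert (c,d) (M u v) \<subseteq> C3 \<times> C3"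
        "pinj (insert (c,d) (M u v))" using step_ext[OF fC fp lt] by blast
      have "card (insert (c,d) (M u v)) = Suc (card (M u v))" using cd(3) fin by simp
      then have l: "card (M u v) < card (insert (c,d) (M u v))" by simp
      have s: "M u v \<subseteq> insert (c,d) (M u v) \<or> (u \<in> S \<and> v \<in> S)" by blast
      have a: "u \<in> S \<and> v \<in> S \<longrightarrow> (\<phi>0 u, \<phi>0 v) \<notin> insert (c,d) (M u v)" using False by blast
      show False by (rule improve[OF mc e cd(4) cd(5) l s a cons])
    qed
  qed
  have two: "card (M u v) \<ge> 2"
  proof (cases "\<exists>w. {u,w} \<in> E \<and> {v,w} \<in> E")
    case False
    then show ?thesis using NT by simp
  next
    case True
    then obtain w where w: "{u,w} \<in> E" "{v,w} \<in> E" by blast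
    have uniq: "\<And>w'. {u,w'} \<in> E \<Longrightarrow> {v,w'} \<in> E \<Longrightarrow> w' = w"
    proof -
      fix w' assume "{u,w'} \<in> E" "{v,w'} \<in> E"
      then have "w = w'" by (rule unique_common[OF sg nas e w])
      then show "w' = w" by (rule sym)
    qed
    have uw: "u \<noteq> w" using edge_ne[OF sg w(1)] .
    have vw: "v \<noteq> w" using edge_ne[OF sg w(2)] .
    have wu: "{w,u} \<in> E" using w(1) by (simp only: insert_commute)
    have t1: "tri (M u v) (M v w) (M w u)" by (rule tri_char[THEN iffD1, OF ct, rule_format, OF e w(2) wu])
    have t2: "tri (M v w) (M w u) (M u v)" by (rule tri_char[THEN iffD1, OF ct, rule_format, OF w(2) wu e])
    have t3: "tri (M w u) (M u v) (M v w)" by (rule tri_char[THEN iffD1, OF ct, rule_format, OF wu e w(2)])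
    have c3m: "cons3 (M u v) (M v w) (M w u)" unfolding cons3_def using t1 t2 t3 by blast
    show ?thesis
    proof (rule ccontr)
      assume "\<not> 2 \<le> card (M u v)"
      then have l1: "card (M u v) \<le> 1" by linarith
      show False
      proof (cases "u \<in> S \<and> v \<in> S")
        case True
        obtain g where g: "g \<subseteq> C3 \<times> C3" "pinj g" "2 \<le> card g" "(\<phi>0 u, \<phi>0 v) \<notin> g"
          "cons3 g (M v w) (M w u)"
          using extB[OF CS[of v w] CS[of w u] PJ[of v w] PJ[of w u]] by blast
        have cons: "consistent_on_triangles E (upd M u v g)"
          by (rule cons_upd_tri[OF ct uniq uv uw vw g(5) Mcv])
        have l: "card (M u v) < card g" using l1 g(3) by linarith
        have s: "M u v \<subseteq> g \<or> (u \<in> S \<and> v \<in> S)" using True by blast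
        have a: "u \<in> S \<and> v \<in> S \<longrightarrow> (\<phi>0 u, \<phi>0 v) \<notin> g" using g(4) by blast
        show False by (rule improve[OF mc e g(1) g(2) l s a cons])
      next
        case False
        obtain g where g: "M u v \<subseteq> g" "g \<subseteq> C3 \<times> C3" "pinj g" "card (M u v) < card g"
          "cons3 g (M v w) (M w u)"
          using extA[OF fC fp l1 CS[of v w] CS[of w u] PJ[of v w] PJ[of w u] c3m] by blast
        have cons: "consistent_on_triangles E (upd M u v g)"
          by (rule cons_upd_tri[OF ct uniq uv uw vw g(5) Mcv])
        have s: "M u v \<subseteq> g \<or> (u \<in> S \<and> v \<in> S)" using g(1) by blast
        have a: "u \<in> S \<and> v \<in> S \<longrightarrow> (\<phi>0 u, \<phi>0 v) \<notin> g" using False by blast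
        show False by (rule improve[OF mc e g(2) g(3) g(4) s a cons])
      qed
    qed
  qed
  show ?thesis unfolding cardeq using two NT by blast
qed


end
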